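(* Let $\gamma$ be a relatively normal-slant helix on a smooth oriented surface $M\subset E^3$ with $k_n \equiv 0$, nowhere-vanishing geodesic curvature, and whose position vector always lies in the plane spanned by $\{T,U\}$. Then $\gamma$ is a slant helix if and only if $\gamma$ is a rectifying curve.
   Context: For a unit speed curve $\gamma$ on an oriented surface $M\subset E^3$, the Darboux frame is $T=\gamma'$, $U$ = unit normal of $M$ along $\gamma$, $V = U\times T$, satisfying $T' = k_g V + k_n U$, $V' = -k_g T + \tau_g U$, $U' = -k_n T - \tau_g V$; here $k_g$, $k_n$, $\tau_g$ are the geodesic curvature, normal curvature and geodesic torsion. The curve $\gamma$ is a relatively normal-slant helix if there is a fixed unit vector $d$ and a constant angle $\phi$ with $\langle V, d\rangle = \cos\phi$ along $\gamma$. "Position vector lies in the plane spanned by $\{T,U\}$" means $\gamma(s) = \lambda_1(s)T(s) + \lambda_2(s)U(s)$ for differentiable functions $\lambda_1,\lambda_2$. With Frenet frame $\{T,N,B\}$, curvature $\kappa>0$ and torsion $\tau$: $\gamma$ is a slant helix if its principal normal $N$ makes a constant angle with a fixed direction (equivalently, $\frac{\kappa^2}{(\kappa^2+\tau^2)^{3/2}}(\tau/\kappa)'$ is constant); $\gamma$ is a rectifying curve if its position vector always lies in its rectifying plane $\mathrm{span}\{T,B\}$ (equivalently, $\tau/\kappa = c_1 s + c_2$ for constants $c_1 \neq 0$, $c_2$). *)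

theory Defs
  imports "HOL-Analysis.Analysis" "HOL-Analysis.Cross3"
begin

definition frenet_T :: "(real \<Rightarrow> real^3) \<Rightarrow> real \<Rightarrow> real^3" where
  "frenet_T \<gamma> s = vector_derivative \<gamma> (at s)"

definition curvature :: "(real \<Rightarrow> real^3) \<Rightarrow> real \<Rightarrow> real" where
  "curvature \<gamma> s = norm (vector_derivative (frenet_T \<gamma>) (at s))"

definition frenet_N :: "(real \<Rightarrow> real^3) \<Rightarrow> real \<Rightarrow> real^3" where
  "frenet_N \<gamma> s = (1 / curvature \<gamma> s) *\<^sub>R vector_derivative (frenet_T \<gamma>) (at s)"

definition frenet_B :: "(real \<Rightarrow> real^3) \<Rightarrow> real \<Rightarrow> real^3" where
  "frenet_B \<gamma> s = cross3 (frenet_T \<gamma> s) (frenet_N \<gamma> s)"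

definition slant_helix :: "real set \<Rightarrow> (real \<Rightarrow> real^3) \<Rightarrow> bool" where
  "slant_helix I \<gamma> \<longleftrightarrow>
     (\<exists>d::real^3. \<exists>\<phi>::real. norm d = 1 \<and> (\<forall>s\<in>I. frenet_N \<gamma> s \<bullet> d = cos \<phi>))"

definition rectifying_curve :: "real set \<Rightarrow> (real \<Rightarrow> real^3) \<Rightarrow> bool" where
  "rectifying_curve I \<gamma> \<longleftrightarrow>
     (\<exists>a b :: real \<Rightarrow> real. \<forall>s\<in>I. \<gamma> s = a s *\<^sub>R frenet_T \<gamma> s + b s *\<^sub>R frenet_B \<gamma> s)"

end

theory Submission
  imports Defs
begin

lemma cross3_triple: "cross3 (a::real^3) (cross3 b c) = (a \<bullet> c) *\<^sub>R b - (a \<bullet> b) *\<^sub>R c"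
  by (simp add: cross3_def inner_vec_def sum_3 vec_eq_iff forall_3 vector_3 algebra_simps)

theorem theorem3p4:
  fixes I :: "real set"
    and \<gamma> T V U :: "real \<Rightarrow> real^3"
    and kg kn \<tau>g :: "real \<Rightarrow> real"
  assumes I: "open I" "is_interval I" "I \<noteq> {}"
    and speed: "\<And>s. s \<in> I \<Longrightarrow> (\<gamma> has_vector_derivative T s) (at s)"
    and unitT: "\<And>s. s \<in> I \<Longrightarrow> norm (T s) = 1"
    and unitU: "\<And>s. s \<in> I \<Longrightarrow> norm (U s) = 1"
    and orthTU: "\<And>s. s \<in> I \<Longrightarrow> T s \<bullet> U s = 0"
    and Vdef: "\<And>s. s \<in> I \<Longrightarrow> V s = cross3 (U s) (T s)"
    and dT: "\<And>s. s \<in> I \<Longrightarrow> (T has_vector_derivative (kg s *\<^sub>R V s + kn s *\<^sub>R U s)) (at s)"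
    and dV: "\<And>s. s \<in> I \<Longrightarrow> (V has_vector_derivative (- kg s *\<^sub>R T s + \<tau>g s *\<^sub>R U s)) (at s)"
    and dU: "\<And>s. s \<in> I \<Longrightarrow> (U has_vector_derivative (- kn s *\<^sub>R T s - \<tau>g s *\<^sub>R V s)) (at s)"
    and smooth: "continuous_on I kg" "continuous_on I kn" "continuous_on I \<tau>g"
    and kn0: "\<And>s. s \<in> I \<Longrightarrow> kn s = 0"
    and kg_nz: "\<And>s. s \<in> I \<Longrightarrow> kg s \<noteq> 0"
    and rn_slant: "\<exists>d::real^3. \<exists>\<phi>::real. norm d = 1 \<and> (\<forall>s\<in>I. V s \<bullet> d = cos \<phi>)"
    and pos: "\<exists>l1 l2 :: real \<Rightarrow> real.
               (\<forall>s\<in>I. l1 differentiable (at s) \<and> l2 differentiable (at s)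
                       \<and> \<gamma> s = l1 s *\<^sub>R T s + l2 s *\<^sub>R U s)"
  shows "slant_helix I \<gamma> \<longleftrightarrow> rectifying_curve I \<gamma>"
proof -
  have Vn: "norm (V s) = 1" if "s \<in> I" for s
  proof -
    have "(norm (cross3 (U s) (T s)))\<^sup>2 + (U s \<bullet> T s)\<^sup>2 = (norm (U s) * norm (T s))\<^sup>2"
      by (rule norm_cross_dot)
    moreover have "U s \<bullet> T s = 0" using orthTU[OF that] by (simp add: inner_commute)
    ultimately have "(norm (V s))\<^sup>2 = 1" using Vdef[OF that] unitT[OF that] unitU[OF that] by simp
    thus ?thesis by (smt (verit) norm_ge_zero power2_eq_1_iff)
  qed
  have FT: "frenet_T \<gamma> s = T s" if "s \<in> I" for s
    unfolding frenet_T_def using speed[OF that] by (rule vector_derivative_at)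
  have dFT: "vector_derivative (frenet_T \<gamma>) (at s) = kg s *\<^sub>R V s" if "s \<in> I" for s
  proof -
    have "(T has_vector_derivative kg s *\<^sub>R V s) (at s)" using dT[OF that] kn0[OF that] by simp
    hence "(frenet_T \<gamma> has_vector_derivative kg s *\<^sub>R V s) (at s)"
      by (rule has_vector_derivative_transform_within_open[OF _ I(1) that]) (simp add: FT)
    thus ?thesis by (rule vector_derivative_at)
  qed
  have curv: "curvature \<gamma> s = \<bar>kg s\<bar>" if "s \<in> I" for s
    unfolding curvature_def using dFT[OF that] Vn[OF that] by simp
  have FN: "frenet_N \<gamma> s = sgn (kg s) *\<^sub>R V s" if "s \<in> I" for s
    unfolding frenet_N_def using curv[OF that] dFT[OF that] kg_nz[OF that]
    by (simp add: sgn_real_def)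
  have FB: "frenet_B \<gamma> s = sgn (kg s) *\<^sub>R U s" if "s \<in> I" for s
  proof -
    have "frenet_B \<gamma> s = sgn (kg s) *\<^sub>R cross3 (T s) (cross3 (U s) (T s))"
      unfolding frenet_B_def FN[OF that] FT[OF that] Vdef[OF that] by (simp add: cross_mult_right)
    also have "cross3 (T s) (cross3 (U s) (T s)) = U s"
      using unitT[OF that] orthTU[OF that] by (simp add: cross3_triple inner_commute norm_eq_1)
    finally show ?thesis .
  qed
  have sgnc: "(\<forall>s\<in>I. kg s > 0) \<or> (\<forall>s\<in>I. kg s < 0)"
  proof (rule ccontr)
    assume "\<not> ?thesis"
    then obtain a b where ab: "a \<in> I" "b \<in> I" "kg a \<le> 0" "kg b \<ge> 0"
      by (meson linorder_not_le)
    have c: "connected (kg ` I)"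
      using connected_continuous_image[OF smooth(1)] I(2) is_interval_connected by blast
    have "0 \<in> kg ` I"
      using connected_contains_Icc[OF c, of "kg a" "kg b"] ab
      by (meson atLeastAtMost_iff imageI subsetD)
    thus False using kg_nz by auto
  qed
  have SH: "slant_helix I \<gamma>"
  proof -
    obtain d \<phi> where d: "norm d = 1" "\<forall>s\<in>I. V s \<bullet> d = cos \<phi>" using rn_slant by blast
    from sgnc show ?thesis
    proof
      assume "\<forall>s\<in>I. kg s > 0"
      thus ?thesis unfolding slant_helix_def using d FN
        by (intro exI[of _ d] exI[of _ \<phi>]) auto
    next
      assume "\<forall>s\<in>I. kg s < 0"
      thus ?thesis unfolding slant_helix_def using d FN
        by (intro exI[of _ d] exI[of _ "\<phi> + pi"]) auto
    qed
  qed
  have RC: "rectifying_curve I \<gamma>"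
  proof -
    obtain l1 l2 where l: "\<forall>s\<in>I. \<gamma> s = l1 s *\<^sub>R T s + l2 s *\<^sub>R U s" using pos by blast
    have "\<forall>s\<in>I. \<gamma> s = l1 s *\<^sub>R frenet_T \<gamma> s + (sgn (kg s) * l2 s) *\<^sub>R frenet_B \<gamma> s"
    proof
      fix s assume s: "s \<in> I"
      have "sgn (kg s) * sgn (kg s) = 1" using kg_nz[OF s] by (simp add: sgn_real_def)
      thus "\<gamma> s = l1 s *\<^sub>R frenet_T \<gamma> s + (sgn (kg s) * l2 s) *\<^sub>R frenet_B \<gamma> s"
        using l s FT[OF s] FB[OF s] by (simp add: scaleR_scaleR mult.commute mult.left_commute)
    qed
    thus ?thesis unfolding rectifying_curve_def by (intro exI[of _ l1] exI[of _ "\<lambda>s. sgn (kg s) * l2 s"]) simp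
  qed
  show ?thesis using SH RC by simp
qed

end
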